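(* Let $n\ge 1$ and let $S\subseteq[n]$ with $n\in S$, and write $r(S)=(r_1,\dots,r_{2m})$. Then for every positive integer $t$, $$i(\mathrm{SM}_n(S),t)=\sum_{(c_1,\dots,c_m)}\ \prod_{j=1}^m F(r_{2j-1},r_{2j},c_j,t),$$ where the sum ranges over all integer vectors $(c_1,\dots,c_m)\in\mathbb Z^m$ such that $c_1+\dots+c_m=0$ and, for every $1\le j\le m$, $-t v_j\le c_j\le t u_j$ and $c_1+\dots+c_j\ge 0$.
   Context: For $S,T\subseteq[n]$, write $T\le S$ if $|T|=|S|$ and, for each $1\le i\le |T|$, the $i$-th smallest element of $T$ is at most the $i$-th smallest element of $S$. The Schubert matroid $\mathrm{SM}_n(S)$ is the matroid on ground set $[n]=\{1,\dots,n\}$ whose bases are $\{T\subseteq[n]: T\le S\}$. For a matroid $M$ on $[n]$ with set of bases $\mathcal B$, its matroid polytope is $\mathcal P(M)=\mathrm{conv}\{e_B: B\in\mathcal B\}\subset\mathbb R^n$, where $e_B=\sum_{b\in B}e_b$ and $e_1,\dots,e_n$ is the standard basis; $i(M,t)$ denotes the number of lattice points $|t\mathcal P(M)\cap\mathbb Z^n|$ of the $t$-th dilate (this is a polynomial in $t$, the Ehrhart polynomial). For $S\subseteq[n]$ with $n\in S$, the indicator vector of $S$ can be written uniquely as $(0^{r_1},1^{r_2},0^{r_3},1^{r_4},\dots,0^{r_{2m-1}},1^{r_{2m}})$, where $x^p$ denotes $p$ consecutive copies of $x$, $r_1\ge0$ and $r_i>0$ for $i\ge2$; set $r(S)=(r_1,\dots,r_{2m})$.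 Given $r(S)=(r_1,\dots,r_{2m})$, define for $1\le i\le m$: $u_i=\min\{r_{2i-1},\sum_{j=i+1}^m r_{2j}\}$ and $v_i=\min\{r_{2i},\sum_{j=1}^{i-1}r_{2j-1}\}$ (empty sums are $0$). For integers $a,b\ge0$ with $a+b\ge1$, $c\in\mathbb Z$ and $t\ge0$, define $$F(a,b,c,t)=\sum_{j=0}^{a+b}(-1)^j\binom{a+b}{j}\binom{(t+1)(b-j)+a+c-1}{a+b-1},$$ with the conventions $\binom00=1$ and $\binom NK=0$ whenever $K<0$ or $N<K$ (for any integers $N,K$). *)

theory Defs
  imports "HOL-Analysis.Analysis"
begin

definition gale_le :: "nat set \<Rightarrow> nat set \<Rightarrow> bool" where
  "gale_le T S \<longleftrightarrow> card T = card S \<and>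
     (\<forall>i < card S. sorted_list_of_set T ! i \<le> sorted_list_of_set S ! i)"

definition schubert_bases :: "nat \<Rightarrow> nat set \<Rightarrow> nat set set" where
  "schubert_bases n S = {T. T \<subseteq> {1..n} \<and> gale_le T S}"

text \<open>Matroid polytope: convex hull of the indicator vectors e_B of the bases,
  points of R^n represented as functions nat \<Rightarrow> real (coordinates outside [n] are 0).\<close>
definition matroid_polytope :: "nat set set \<Rightarrow> (nat \<Rightarrow> real) set" where
  "matroid_polytope Bs = {x. \<exists>l :: nat set \<Rightarrow> real. (\<forall>B\<in>Bs. 0 \<le> l B) \<and> (\<Sum>B\<in>Bs. l B) = 1
        \<and> x = (\<lambda>i. \<Sum>B\<in>Bs. l B * indicator B i)}"

definition lattice_count :: "(nat \<Rightarrow> real) set \<Rightarrow> nat \<Rightarrow> nat" where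
  "lattice_count P t = card {y. (\<forall>i. y i \<in> \<int>) \<and> (\<exists>x\<in>P. y = (\<lambda>i. real t * x i))}"

definition ehrhart_schubert :: "nat \<Rightarrow> nat set \<Rightarrow> nat \<Rightarrow> nat" where
  "ehrhart_schubert n S t = lattice_count (matroid_polytope (schubert_bases n S)) t"

text \<open>rs = r(S) (0-indexed list, so r_k = rs ! (k-1)): the indicator vector of S on [n]
  equals 0^{r_1} 1^{r_2} ... 0^{r_{2m-1}} 1^{r_{2m}}, with r_1 \<ge> 0 and r_i > 0 for i \<ge> 2.\<close>
definition is_r_of :: "nat \<Rightarrow> nat set \<Rightarrow> nat list \<Rightarrow> bool" where
  "is_r_of n S rs \<longleftrightarrow> even (length rs) \<and> (\<forall>k. 1 \<le> k \<and> k < length rs \<longrightarrow> 0 < rs ! k) \<and>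
     map (\<lambda>i. i \<in> S) [1..<n+1] = concat (map (\<lambda>k. replicate (rs ! k) (odd k)) [0..<length rs])"

definition rr :: "nat list \<Rightarrow> nat \<Rightarrow> nat" where
  "rr rs k = rs ! (k - 1)"

definition u_of :: "nat list \<Rightarrow> nat \<Rightarrow> nat" where
  "u_of rs i = min (rr rs (2*i - 1)) (\<Sum>j\<in>{i+1..length rs div 2}. rr rs (2*j))"

definition v_of :: "nat list \<Rightarrow> nat \<Rightarrow> nat" where
  "v_of rs i = min (rr rs (2*i)) (\<Sum>j\<in>{1..<i}. rr rs (2*j - 1))"

definition ibinom :: "int \<Rightarrow> int \<Rightarrow> int" where
  "ibinom N K = (if K < 0 \<or> N < K then 0 else int (nat N choose nat K))"

definition FF :: "nat \<Rightarrow> nat \<Rightarrow> int \<Rightarrow> nat \<Rightarrow> int" where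
  "FF a b c t = (\<Sum>j = 0..a+b. (-1)^j * int ((a+b) choose j) *
       ibinom ((int t + 1) * (int b - int j) + int a + c - 1) (int a + int b - 1))"

definition admissible_c :: "nat list \<Rightarrow> nat \<Rightarrow> int list set" where
  "admissible_c rs t = {cs. length cs = length rs div 2 \<and> sum_list cs = 0 \<and>
      (\<forall>j\<in>{1..length rs div 2}.
          - (int t * int (v_of rs j)) \<le> cs ! (j-1) \<and> cs ! (j-1) \<le> int t * int (u_of rs j)
          \<and> 0 \<le> sum_list (take j cs))}"

end

theory Submission
  imports Defs
begin
definition Vs :: "nat \<Rightarrow> nat \<Rightarrow> int \<Rightarrow> nat list set" where
  "Vs t L d = {ys. length ys = L \<and> (\<forall>x\<in>set ys. x \<le> t) \<and> int (sum_list ys) = d}"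

definition DD :: "nat \<Rightarrow> int \<Rightarrow> int" where
  "DD L s = ibinom (s + int L - 1) (int L - 1)"

definition EE :: "nat \<Rightarrow> nat \<Rightarrow> int \<Rightarrow> int" where
  "EE t L d = (\<Sum>j\<le>L. (-1)^j * int (L choose j) * DD L (d - (int t + 1) * int j))"

lemma finite_Vs: "finite (Vs t L d)"
proof -
  have "Vs t L d \<subseteq> {xs. set xs \<subseteq> {0..t} \<and> length xs = L}" unfolding Vs_def by auto
  moreover have "finite {xs. set xs \<subseteq> {0..t} \<and> length xs = L}"
    by (rule finite_lists_length_eq) simp
  ultimately show ?thesis by (rule finite_subset)
qed

lemma Vs_Suc: "Vs t (Suc L) d = (\<Union>x\<in>{0..t}. (\<lambda>ys. x # ys) ` Vs t L (d - int x))"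
  unfolding Vs_def
  apply (rule set_eqI)
  subgoal for ys by (cases ys) (auto simp: image_iff)
  done

lemma card_Vs_Suc: "card (Vs t (Suc L) d) = (\<Sum>x\<in>{0..t}. card (Vs t L (d - int x)))"
  unfolding Vs_Suc
  apply (subst card_UN_disjoint)
     apply (auto simp: finite_Vs card_image)
  done

lemma card_Vs_1: "card (Vs t 1 d) = (if 0 \<le> d \<and> d \<le> int t then 1 else 0)"
proof -
  have "Vs t 1 d = (if 0 \<le> d \<and> d \<le> int t then {[nat d]} else {})"
    unfolding Vs_def
    apply (rule set_eqI)
    apply (case_tac x)
     apply (auto simp: length_Suc_conv)
    done
  then show ?thesis by simp
qed

lemma DD_1: "DD 1 s = (if 0 \<le> s then 1 else 0)"
  unfolding DD_def ibinom_def by auto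

lemma DD_step:
  assumes "1 \<le> L"
  shows "DD (Suc L) s - DD (Suc L) (s - 1) = DD L s"
proof (cases "s \<ge> 1")
  case True
  define N where "N = nat (s + int L - 1)"
  have sN: "s + int L - 1 = int N" using True N_def by simp
  obtain L' where L': "L = Suc L'" using assms by (cases L) auto
  have nL: "nat (1 + int L') = Suc L'" by simp
  have "DD (Suc L) s = int (Suc N choose Suc L')"
    unfolding DD_def ibinom_def using True sN L' by (auto simp: nat_add_distrib)
  moreover have "DD (Suc L) (s - 1) = int (N choose Suc L')"
    unfolding DD_def ibinom_def using True sN L' nL by auto
  moreover have "DD L s = int (N choose L')"
    unfolding DD_def ibinom_def using True sN L' by auto
  ultimately show ?thesis by simp
next
  case False
  then show ?thesis
  proof (cases "s = 0")
    case True
    then show ?thesis unfolding DD_def ibinom_def using assms by auto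
  next
    case False
    with \<open>\<not> s \<ge> 1\<close> have "s < 0" by simp
    then show ?thesis unfolding DD_def ibinom_def using assms by auto
  qed
qed

lemma DD_tele:
  assumes "1 \<le> L"
  shows "(\<Sum>x\<in>{0..t}. DD L (s - int x)) = DD (Suc L) s - DD (Suc L) (s - int t - 1)"
proof (induction t)
  case 0
  then show ?case using DD_step[OF assms, of s] by simp
next
  case (Suc t)
  have "(\<Sum>x\<in>{0..Suc t}. DD L (s - int x)) = (\<Sum>x\<in>{0..t}. DD L (s - int x)) + DD L (s - int (Suc t))"
    by simp
  also have "\<dots> = DD (Suc L) s - DD (Suc L) (s - int t - 1) + DD L (s - int (Suc t))"
    using Suc by simp
  also have "DD L (s - int (Suc t)) = DD (Suc L) (s - int t - 1) - DD (Suc L) (s - int (Suc t) - 1)"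
    using DD_step[OF assms, of "s - int t - 1"] by (simp add: algebra_simps)
  finally show ?case by simp
qed

lemma EE_step:
  assumes "1 \<le> L"
  shows "(\<Sum>x\<in>{0..t}. EE t L (d - int x)) = EE t (Suc L) d"
proof -
  define g where "g j = DD (Suc L) (d - (int t + 1) * int j)" for j
  have "(\<Sum>x\<in>{0..t}. EE t L (d - int x)) =
     (\<Sum>j\<le>L. (-1)^j * int (L choose j) * (\<Sum>x\<in>{0..t}. DD L (d - (int t + 1) * int j - int x)))"
    unfolding EE_def
    by (subst sum.swap) (simp add: sum_distrib_left algebra_simps)
  also have "\<dots> = (\<Sum>j\<le>L. (-1)^j * int (L choose j) * (g j - g (Suc j)))"
    by (rule sum.cong[OF refl], subst DD_tele[OF assms]) (simp add: g_def algebra_simps)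
  also have "\<dots> = (\<Sum>j\<le>L. (-1)^j * int (L choose j) * g j) - (\<Sum>j\<le>L. (-1)^j * int (L choose j) * g (Suc j))"
    by (simp add: sum_subtractf algebra_simps)
  also have "(\<Sum>j\<le>L. (-1)^j * int (L choose j) * g j) = (\<Sum>j\<le>Suc L. (-1)^j * int (L choose j) * g j)"
    by simp
  also have "\<dots> = g 0 + (\<Sum>j\<le>L. (-1)^(Suc j) * int (L choose Suc j) * g (Suc j))"
    by (subst sum.atMost_Suc_shift) simp
  finally have 1: "(\<Sum>x\<in>{0..t}. EE t L (d - int x)) = g 0 + (\<Sum>j\<le>L. (-1)^(Suc j) * int (L choose Suc j) * g (Suc j)) - (\<Sum>j\<le>L. (-1)^j * int (L choose j) * g (Suc j))"
    by simp
  have 2: "(\<Sum>j\<le>L. (-1)^(Suc j) * (int (L choose Suc j) + int (L choose j)) * g (Suc j)) = (\<Sum>j\<le>L. (-1)^(Suc j) * int (L choose Suc j) * g (Suc j)) - (\<Sum>j\<le>L. (-1)^j * int (L choose j) * g (Suc j))"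
    unfolding sum_subtractf[symmetric] by (rule sum.cong) (simp_all add: algebra_simps)
  have "EE t (Suc L) d = (\<Sum>j\<le>Suc L. (-1)^j * int (Suc L choose j) * g j)"
    unfolding EE_def g_def by simp
  also have "\<dots> = g 0 + (\<Sum>j\<le>L. (-1)^(Suc j) * int (Suc L choose Suc j) * g (Suc j))"
    by (subst sum.atMost_Suc_shift) simp
  also have "\<dots> = g 0 + (\<Sum>j\<le>L. (-1)^(Suc j) * (int (L choose Suc j) + int (L choose j)) * g (Suc j))"
    by (simp add: add.commute)
  finally show ?thesis using 1 2 by simp
qed

lemma card_Vs_EE:
  assumes "1 \<le> L"
  shows "int (card (Vs t L d)) = EE t L d"
  using assms
proof (induction L arbitrary: d rule: nat_induct_at_least)
  case base
  have "EE t 1 d = DD 1 d - DD 1 (d - (int t + 1))"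
    unfolding EE_def by simp
  then show ?case using card_Vs_1[of t d] DD_1[of d] DD_1[of "d - (int t+1)"] by auto
next
  case (Suc L)
  have "int (card (Vs t (Suc L) d)) = (\<Sum>x\<in>{0..t}. int (card (Vs t L (d - int x))))"
    by (simp add: card_Vs_Suc)
  also have "\<dots> = (\<Sum>x\<in>{0..t}. EE t L (d - int x))" using Suc by simp
  also have "\<dots> = EE t (Suc L) d" by (rule EE_step[OF Suc(1)])
  finally show ?case .
qed

lemma FF_card:
  assumes "1 \<le> a + b"
  shows "FF a b c t = int (card (Vs t (a+b) (int t * int b + c)))"
proof -
  have "FF a b c t = EE t (a+b) (int t * int b + c)"
    unfolding FF_def EE_def DD_def atLeast0AtMost
    by (rule sum.cong[OF refl]) (simp add: algebra_simps)
  then show ?thesis using card_Vs_EE[OF assms] by simp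
qed

definition cntT :: "bool list \<Rightarrow> nat" where "cntT ps = length (filter id ps)"

definition blk :: "nat \<Rightarrow> nat \<Rightarrow> bool list" where
  "blk a b = replicate a False @ replicate b True"

definition Ws :: "nat \<Rightarrow> bool list \<Rightarrow> int \<Rightarrow> nat list set" where
  "Ws t ps e = {ys. length ys = length ps \<and> (\<forall>x\<in>set ys. x \<le> t) \<and>
     (\<forall>j\<le>length ps. int t * int (cntT (take j ps)) \<le> e + int (sum_list (take j ys))) \<and>
     e + int (sum_list ys) = int t * int (cntT ps)}"

lemma sum_list_le_bound: "(\<forall>x\<in>set ys. x \<le> t) \<Longrightarrow> sum_list ys \<le> t * length ys"
  by (induction ys) auto

lemma cntT_append[simp]: "cntT (xs @ ys) = cntT xs + cntT ys"
  unfolding cntT_def by simp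

lemma cntT_blk[simp]: "cntT (blk a b) = b"
  unfolding cntT_def blk_def by simp

lemma length_blk[simp]: "length (blk a b) = a + b"
  unfolding blk_def by simp

lemma cntT_take_blk: "j \<le> a + b \<Longrightarrow> cntT (take j (blk a b)) = j - a"
  unfolding cntT_def blk_def by (simp add: min_def)

lemma finite_Ws: "finite (Ws t ps e)"
proof -
  have "Ws t ps e \<subseteq> {xs. set xs \<subseteq> {0..t} \<and> length xs = length ps}" unfolding Ws_def by auto
  moreover have "finite {xs. set xs \<subseteq> {0..t} \<and> length xs = length ps}"
    by (rule finite_lists_length_eq) simp
  ultimately show ?thesis by (rule finite_subset)
qed

lemma Ws_nil: "Ws t [] e = (if e = 0 then {[]} else {})"
  unfolding Ws_def cntT_def by auto

lemma Ws_cons: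
  "Ws t (blk a b @ rest) e = (if 0 \<le> e then
     (\<Union>c\<in>{-(int t * int b)..int t * int a}. (\<lambda>(p,q). p @ q) ` (Vs t (a+b) (int t * int b + c) \<times> Ws t rest (e + c)))
     else {})" (is "?L = ?R")
proof (rule set_eqI)
  fix ys
  show "ys \<in> ?L \<longleftrightarrow> ys \<in> ?R"
  proof
    assume ys: "ys \<in> ?L"
    define p where "p = take (a+b) ys"
    define q where "q = drop (a+b) ys"
    have len: "length ys = a + b + length rest" and bd: "\<forall>x\<in>set ys. x \<le> t"
      and cond: "\<And>j. j \<le> a + b + length rest \<Longrightarrow>
          int t * int (cntT (take j (blk a b @ rest))) \<le> e + int (sum_list (take j ys))"
      and tot: "e + int (sum_list ys) = int t * int (cntT (blk a b @ rest))"
      using ys unfolding Ws_def by auto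
    have e0: "0 \<le> e" using cond[of 0] by (simp add: cntT_def)
    define c where "c = int (sum_list p) - int t * int b"
    have lp: "length p = a + b" using len p_def by simp
    have bp: "\<forall>x\<in>set p. x \<le> t" using bd p_def by (meson in_set_takeD)
    have bq: "\<forall>x\<in>set q. x \<le> t" using bd q_def by (meson in_set_dropD)
    have "sum_list p \<le> t * (a + b)" using sum_list_le_bound[OF bp] lp by simp
    then have "int (sum_list p) \<le> int t * (int a + int b)"
      by (metis of_nat_add of_nat_le_iff of_nat_mult)
    then have crange: "c \<in> {-(int t * int b)..int t * int a}" unfolding c_def
      by (simp add: algebra_simps)
    have pV: "p \<in> Vs t (a+b) (int t * int b + c)" unfolding Vs_def c_def using lp bp by simp
    have ysplit: "ys = p @ q" unfolding p_def q_def by simp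
    have qW: "q \<in> Ws t rest (e + c)"
      unfolding Ws_def
    proof (intro CollectI conjI allI impI)
      show "length q = length rest" using len q_def by simp
      show "\<forall>x\<in>set q. x \<le> t" by (rule bq)
    next
      fix j assume j: "j \<le> length rest"
      have "take (a + b + j) (blk a b @ rest) = blk a b @ take j rest" by simp
      moreover have "take (a + b + j) ys = p @ take j q" using ysplit lp by simp
      ultimately show "int t * int (cntT (take j rest)) \<le> e + c + int (sum_list (take j q))"
        using cond[of "a+b+j"] j unfolding c_def by (simp add: algebra_simps)
    next
      show "e + c + int (sum_list q) = int t * int (cntT rest)"
        using tot ysplit unfolding c_def by (simp add: algebra_simps)
    qed
    show "ys \<in> ?R" using e0 crange pV qW ysplit by auto
  next
    assume ys: "ys \<in> ?R"
    then have e0: "0 \<le> e" by (auto split: if_splits)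
    from ys e0 obtain c p q where crange: "c \<in> {-(int t * int b)..int t * int a}"
      and pV: "p \<in> Vs t (a+b) (int t * int b + c)" and qW: "q \<in> Ws t rest (e + c)"
      and ysplit: "ys = p @ q" by auto
    have lp: "length p = a + b" and bp: "\<forall>x\<in>set p. x \<le> t" and sp: "int (sum_list p) = int t * int b + c"
      using pV unfolding Vs_def by auto
    have lq: "length q = length rest" and bq: "\<forall>x\<in>set q. x \<le> t"
      and condq: "\<And>j. j \<le> length rest \<Longrightarrow> int t * int (cntT (take j rest)) \<le> e + c + int (sum_list (take j q))"
      and totq: "e + c + int (sum_list q) = int t * int (cntT rest)"
      using qW unfolding Ws_def by auto
    have ec0: "0 \<le> e + c" using condq[of 0] by (simp add: cntT_def)
    show "ys \<in> ?L" unfolding Ws_def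
    proof (intro CollectI conjI allI impI)
      show "length ys = length (blk a b @ rest)" using ysplit lp lq by simp
      show "\<forall>x\<in>set ys. x \<le> t" using ysplit bp bq by auto
    next
      fix j assume j: "j \<le> length (blk a b @ rest)"
      show "int t * int (cntT (take j (blk a b @ rest))) \<le> e + int (sum_list (take j ys))"
      proof (cases "j \<le> a + b")
        case True
        have tj: "take j (blk a b @ rest) = take j (blk a b)" using True by simp
        have tys: "take j ys = take j p" using True ysplit lp by simp
        have "sum_list p = sum_list (take j p) + sum_list (drop j p)"
          by (metis append_take_drop_id sum_list_append)
        moreover have "sum_list (drop j p) \<le> t * (a + b - j)"
          using sum_list_le_bound[of "drop j p" t] bp lp by (simp add: in_set_dropD)
        ultimately have n1: "sum_list p \<le> sum_list (take j p) + t * (a + b - j)" by linarith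
        then have "int (sum_list p) \<le> int (sum_list (take j p)) + int t * int (a + b - j)"
          by (simp only: of_nat_add[symmetric] of_nat_mult[symmetric] of_nat_le_iff)
        moreover have "int (a + b - j) = int a + int b - int j" using True by simp
        ultimately have "int (sum_list p) \<le> int (sum_list (take j p)) + int t * (int a + int b - int j)"
          by simp
        then have key: "int t * int b + c \<le> int (sum_list (take j p)) + int t * (int a + int b - int j)"
          using sp by simp
        show ?thesis
        proof (cases "j \<le> a")
          case True
          then show ?thesis using tj tys e0 \<open>j \<le> a + b\<close> by (simp add: cntT_take_blk)
        next
          case False
          then have "int (j - a) = int j - int a" by simp
          then show ?thesis using tj tys key ec0 \<open>j \<le> a + b\<close>
            by (simp add: cntT_take_blk algebra_simps)
        qed
      next
        case False
        then obtain j' where j': "j = a + b + j'" by (metis le_add_diff_inverse nat_le_linear)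
        have "take j (blk a b @ rest) = blk a b @ take j' rest" using j' by simp
        moreover have "take j ys = p @ take j' q" using ysplit lp j' by simp
        moreover have "j' \<le> length rest" using j j' by simp
        ultimately show ?thesis using condq[of j'] sp by (simp add: algebra_simps)
      qed
    next
      show "e + int (sum_list ys) = int t * int (cntT (blk a b @ rest))"
        using ysplit totq sp by (simp add: algebra_simps)
    qed
  qed
qed

lemma card_Ws_cons:
  "card (Ws t (blk a b @ rest) e) = (if 0 \<le> e then
     (\<Sum>c\<in>{-(int t * int b)..int t * int a}. card (Vs t (a+b) (int t * int b + c)) * card (Ws t rest (e + c)))
     else 0)"
proof (cases "0 \<le> e")
  case True
  define U where "U c = (\<lambda>(p,q). p @ q) ` (Vs t (a+b) (int t * int b + c) \<times> Ws t rest (e + c))" for c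
  have inj: "inj_on (\<lambda>(p,q). p @ q) (Vs t (a+b) d \<times> Ws t rest e')" for d e'
  proof (rule inj_onI)
    fix x y assume x: "x \<in> Vs t (a+b) d \<times> Ws t rest e'" and y: "y \<in> Vs t (a+b) d \<times> Ws t rest e'"
      and eq: "(case x of (p, q) \<Rightarrow> p @ q) = (case y of (p, q) \<Rightarrow> p @ q)"
    obtain p q p' q' where xy: "x = (p,q)" "y = (p',q')" by (cases x, cases y) 
    have "length p = length p'" using x y xy unfolding Vs_def by simp
    then show "x = y" using eq xy by simp
  qed
  have cU: "card (U c) = card (Vs t (a+b) (int t * int b + c)) * card (Ws t rest (e + c))" for c
    unfolding U_def by (simp add: card_image[OF inj] card_cartesian_product)
  have fU: "finite (U c)" for c unfolding U_def by (simp add: finite_Vs finite_Ws)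
  have dU: "U c \<inter> U c' = {}" if "c \<noteq> c'" for c c'
  proof (rule ccontr)
    assume "U c \<inter> U c' \<noteq> {}"
    then obtain z where z: "z \<in> U c" "z \<in> U c'" by blast
    from z(1) obtain p q where p: "p \<in> Vs t (a+b) (int t * int b + c)" "z = p @ q" unfolding U_def by auto
    from z(2) obtain p' q' where p': "p' \<in> Vs t (a+b) (int t * int b + c')" "z = p' @ q'" unfolding U_def by auto
    have pq: "p \<in> Vs t (a+b) (int t * int b + c)" "p' \<in> Vs t (a+b) (int t * int b + c')"
      and eq: "p @ q = p' @ q'" using p p' by auto
    have "length p = length p'" using pq unfolding Vs_def by simp
    then have "p = p'" using eq by simp
    then show False using pq that unfolding Vs_def by simp
  qed
  have "Ws t (blk a b @ rest) e = (\<Union>c\<in>{-(int t * int b)..int t * int a}. U c)"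
    unfolding Ws_cons U_def using True by simp
  then have "card (Ws t (blk a b @ rest) e) = (\<Sum>c\<in>{-(int t * int b)..int t * int a}. card (U c))"
    using fU dU by (simp add: card_UN_disjoint)
  then show ?thesis using True cU by simp
qed (simp add: Ws_cons)

definition As :: "nat \<Rightarrow> (nat \<times> nat) list \<Rightarrow> int \<Rightarrow> int list set" where
  "As t bl e = {cs. length cs = length bl \<and>
     (\<forall>j<length bl. -(int t * int (snd (bl!j))) \<le> cs!j \<and> cs!j \<le> int t * int (fst (bl!j))) \<and>
     (\<forall>j\<le>length bl. 0 \<le> e + sum_list (take j cs)) \<and> e + sum_list cs = 0}"

definition prodF :: "nat \<Rightarrow> (nat \<times> nat) list \<Rightarrow> int list \<Rightarrow> int" where
  "prodF t bl cs = (\<Prod>j<length bl. FF (fst (bl!j)) (snd (bl!j)) (cs!j) t)"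

lemma As_nil: "As t [] e = (if e = 0 then {[]} else {})"
  unfolding As_def by auto

lemma As_cons: "As t ((a,b)#bl) e = (if 0 \<le> e then
   (\<Union>c\<in>{-(int t * int b)..int t * int a}. (\<lambda>cs. c # cs) ` As t bl (e + c)) else {})" (is "?L = ?R")
proof (rule set_eqI)
  fix cs
  show "cs \<in> ?L \<longleftrightarrow> cs \<in> ?R"
  proof
    assume cs: "cs \<in> ?L"
    then obtain c cs' where c: "cs = c # cs'" unfolding As_def by (cases cs) auto
    have len: "length cs' = length bl"
      and bnd: "\<And>j. j < Suc (length bl) \<Longrightarrow> -(int t * int (snd (((a,b)#bl)!j))) \<le> cs!j \<and> cs!j \<le> int t * int (fst (((a,b)#bl)!j))"
      and pre: "\<And>j. j \<le> Suc (length bl) \<Longrightarrow> 0 \<le> e + sum_list (take j cs)"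
      and tot: "e + sum_list cs = 0"
      using cs c unfolding As_def by auto
    have e0: "0 \<le> e" using pre[of 0] by simp
    have cr: "c \<in> {-(int t * int b)..int t * int a}" using bnd[of 0] c by simp
    have "cs' \<in> As t bl (e + c)" unfolding As_def
    proof (intro CollectI conjI allI impI)
      show "length cs' = length bl" by (rule len)
    next
      fix j assume "j < length bl"
      then show "- (int t * int (snd (bl ! j))) \<le> cs' ! j" "cs' ! j \<le> int t * int (fst (bl ! j))"
        using bnd[of "Suc j"] c by auto
    next
      fix j assume "j \<le> length bl"
      then show "0 \<le> e + c + sum_list (take j cs')" using pre[of "Suc j"] c by (simp add: algebra_simps)
    next
      show "e + c + sum_list cs' = 0" using tot c by (simp add: algebra_simps)
    qed
    then show "cs \<in> ?R" using e0 cr c by auto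
  next
    assume cs: "cs \<in> ?R"
    then have e0: "0 \<le> e" by (auto split: if_splits)
    from cs e0 obtain c cs' where cr: "c \<in> {-(int t * int b)..int t * int a}"
      and cs': "cs' \<in> As t bl (e + c)" and c: "cs = c # cs'" by auto
    have len: "length cs' = length bl"
      and bnd: "\<And>j. j < length bl \<Longrightarrow> -(int t * int (snd (bl!j))) \<le> cs'!j \<and> cs'!j \<le> int t * int (fst (bl!j))"
      and pre: "\<And>j. j \<le> length bl \<Longrightarrow> 0 \<le> e + c + sum_list (take j cs')"
      and tot: "e + c + sum_list cs' = 0"
      using cs' unfolding As_def by auto
    show "cs \<in> ?L" unfolding As_def
    proof (intro CollectI conjI allI impI)
      show "length cs = length ((a, b) # bl)" using len c by simp
    next
      fix j assume j: "j < length ((a, b) # bl)"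
      show "- (int t * int (snd (((a, b) # bl) ! j))) \<le> cs ! j"
        using j bnd[of "j - 1"] cr c by (cases j) auto
      show "cs ! j \<le> int t * int (fst (((a, b) # bl) ! j))"
        using j bnd[of "j - 1"] cr c by (cases j) auto
    next
      fix j assume j: "j \<le> length ((a, b) # bl)"
      show "0 \<le> e + sum_list (take j cs)"
        using j pre[of "j - 1"] e0 c by (cases j) (auto simp: algebra_simps)
    next
      show "e + sum_list cs = 0" using tot c by (simp add: algebra_simps)
    qed
  qed
qed

lemma finite_As: "finite (As t bl e)"
proof (induction bl arbitrary: e)
  case Nil
  then show ?case by (simp add: As_nil)
next
  case (Cons x bl)
  obtain a b where x: "x = (a,b)" by (cases x)
  show ?case unfolding x As_cons using Cons by simp
qed

lemma prodF_cons: "prodF t ((a,b)#bl) (c#cs) = FF a b c t * prodF t bl cs"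
  unfolding prodF_def by (simp only: length_Cons prod.lessThan_Suc_shift) simp

lemma sum_As_cons: "(\<Sum>cs\<in>As t ((a,b)#bl) e. prodF t ((a,b)#bl) cs) = (if 0 \<le> e then
   (\<Sum>c\<in>{-(int t * int b)..int t * int a}. FF a b c t * (\<Sum>cs\<in>As t bl (e + c). prodF t bl cs)) else 0)"
proof (cases "0 \<le> e")
  case True
  have "(\<Sum>cs\<in>As t ((a,b)#bl) e. prodF t ((a,b)#bl) cs) =
     (\<Sum>c\<in>{-(int t * int b)..int t * int a}. (\<Sum>cs\<in>(\<lambda>cs. c # cs) ` As t bl (e + c). prodF t ((a,b)#bl) cs))"
    unfolding As_cons using True
    by (simp add: sum.UNION_disjoint finite_As) (intro sum.UNION_disjoint; auto simp: finite_As)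
  also have "\<dots> = (\<Sum>c\<in>{-(int t * int b)..int t * int a}. FF a b c t * (\<Sum>cs\<in>As t bl (e + c). prodF t bl cs))"
    by (rule sum.cong[OF refl]) (simp add: sum.reindex prodF_cons sum_distrib_left)
  finally show ?thesis using True by simp
qed (simp add: As_cons)

definition ofbl :: "(nat \<times> nat) list \<Rightarrow> bool list" where
  "ofbl bl = concat (map (\<lambda>(a,b). blk a b) bl)"

lemma main_count:
  assumes "\<forall>x\<in>set bl. 1 \<le> fst x + snd x"
  shows "int (card (Ws t (ofbl bl) e)) = (\<Sum>cs\<in>As t bl e. prodF t bl cs)"
  using assms
proof (induction bl arbitrary: e)
  case Nil
  then show ?case by (simp add: ofbl_def Ws_nil As_nil prodF_def)
next
  case (Cons x bl)
  obtain a b where x: "x = (a,b)" by (cases x)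
  have ab: "1 \<le> a + b" using Cons.prems x by simp
  have "ofbl (x # bl) = blk a b @ ofbl bl" unfolding ofbl_def x by simp
  then have "int (card (Ws t (ofbl (x # bl)) e)) = (if 0 \<le> e then
     (\<Sum>c\<in>{-(int t * int b)..int t * int a}. int (card (Vs t (a+b) (int t * int b + c))) * int (card (Ws t (ofbl bl) (e + c))))
     else 0)"
    by (simp add: card_Ws_cons)
  also have "\<dots> = (if 0 \<le> e then
   (\<Sum>c\<in>{-(int t * int b)..int t * int a}. FF a b c t * (\<Sum>cs\<in>As t bl (e + c). prodF t bl cs)) else 0)"
    using Cons.IH Cons.prems FF_card[OF ab] by simp
  also have "\<dots> = (\<Sum>cs\<in>As t (x#bl) e. prodF t (x#bl) cs)"
    unfolding x by (rule sum_As_cons[symmetric])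
  finally show ?case .
qed

lemma sls_count:
  fixes T :: "nat set"
  assumes "finite T" "i < card T"
  shows "(sorted_list_of_set T ! i \<le> s) \<longleftrightarrow> (Suc i \<le> card {x\<in>T. x \<le> s})"
proof -
  define xs where "xs = sorted_list_of_set T"
  have st: "set xs = T" and len: "length xs = card T" and dis: "distinct xs" and so: "sorted xs"
    using assms unfolding xs_def by auto
  have fin: "finite {x\<in>T. x \<le> s}" using assms by simp
  show ?thesis
  proof
    assume h: "sorted_list_of_set T ! i \<le> s"
    have "(!) xs ` {0..i} \<subseteq> {x\<in>T. x \<le> s}"
    proof
      fix y assume "y \<in> (!) xs ` {0..i}"
      then obtain k where k: "k \<le> i" "y = xs ! k" by auto
      have "xs ! k \<le> xs ! i" using sorted_nth_mono[OF so k(1)] assms len by simp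
      moreover have "xs ! k \<in> set xs" using k assms len by (intro nth_mem) simp
      ultimately show "y \<in> {x\<in>T. x \<le> s}" using k h assms len st xs_def by auto
    qed
    moreover have "card ((!) xs ` {0..i}) = Suc i"
      by (subst card_image) (use inj_on_nth[OF dis] assms len in auto)
    ultimately show "Suc i \<le> card {x\<in>T. x \<le> s}" using card_mono[OF fin] by metis
  next
    assume h: "Suc i \<le> card {x\<in>T. x \<le> s}"
    show "sorted_list_of_set T ! i \<le> s"
    proof (rule ccontr)
      assume "\<not> sorted_list_of_set T ! i \<le> s"
      then have gt: "s < xs ! i" unfolding xs_def by simp
      have "{x\<in>T. x \<le> s} \<subseteq> (!) xs ` {0..<i}"
      proof
        fix y assume y: "y \<in> {x\<in>T. x \<le> s}"
        then obtain k where k: "k < length xs" "y = xs ! k" using st by (auto simp: in_set_conv_nth)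
        have "k < i"
        proof (rule ccontr)
          assume "\<not> k < i"
          then have "xs ! i \<le> xs ! k" using sorted_nth_mono[OF so] k by simp
          then show False using gt y k by simp
        qed
        then show "y \<in> (!) xs ` {0..<i}" using k by auto
      qed
      then have "card {x\<in>T. x \<le> s} \<le> card ((!) xs ` {0..<i})" by (rule card_mono[rotated]) simp
      also have "\<dots> \<le> i" using card_image_le[of "{0..<i}" "(!) xs"] by simp
      finally show False using h by simp
    qed
  qed
qed

lemma gale_prefix:
  fixes T S :: "nat set"
  assumes "finite T" "finite S" "gale_le T S"
  shows "card {x\<in>S. x \<le> j} \<le> card {x\<in>T. x \<le> j}"
proof -
  define p where "p = card {x\<in>S. x \<le> j}"
  show ?thesis
  proof (cases "p = 0")
    case True then show ?thesis unfolding p_def[symmetric] by simp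
  next
    case False
    define i where "i = p - 1"
    have "p \<le> card S" unfolding p_def using assms by (intro card_mono) auto
    then have iS: "i < card S" using False i_def by simp
    have "sorted_list_of_set S ! i \<le> j" using sls_count[OF assms(2) iS, of j] False i_def p_def by simp
    moreover have cT: "card T = card S" using assms unfolding gale_le_def by simp
    moreover have "sorted_list_of_set T ! i \<le> sorted_list_of_set S ! i"
      using assms iS unfolding gale_le_def by simp
    ultimately have "sorted_list_of_set T ! i \<le> j" by simp
    then have "Suc i \<le> card {x\<in>T. x \<le> j}" using sls_count[OF assms(1), of i j] iS cT by simp
    then show ?thesis using False i_def unfolding p_def[symmetric] by simp
  qed
qed

lemma prefix_gale:
  fixes T S :: "nat set"
  assumes "finite T" "finite S" "card T = card S" "\<And>j. card {x\<in>S. x \<le> j} \<le> card {x\<in>T. x \<le> j}"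
  shows "gale_le T S"
  unfolding gale_le_def
proof (intro conjI allI impI)
  show "card T = card S" by fact
  fix i assume iS: "i < card S"
  define s where "s = sorted_list_of_set S ! i"
  have "Suc i \<le> card {x\<in>S. x \<le> s}" using sls_count[OF assms(2) iS, of s] unfolding s_def by simp
  also have "\<dots> \<le> card {x\<in>T. x \<le> s}" by (rule assms(4))
  finally have "Suc i \<le> card {x\<in>T. x \<le> s}" .
  then show "sorted_list_of_set T ! i \<le> sorted_list_of_set S ! i"
    using sls_count[OF assms(1), of i s] iS assms(3) s_def by simp
qed

lemma inj_mod_interval:
  fixes t :: nat
  assumes "l \<le> t"
  shows "inj_on (\<lambda>u. u mod t) {a..<a+l}"
proof (rule inj_onI)
  have *: "u = u'" if "u \<in> {a..<a+l}" "u' \<in> {a..<a+l}" "u mod t = u' mod t" "u \<le> u'" for u u'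
  proof -
    have "t dvd u' - u" using that mod_eq_dvd_iff_nat[of u u' t] by simp
    moreover have "u' - u < t" using that assms by simp
    ultimately have "u' - u = 0" by (metis dvd_imp_le not_less neq0_conv)
    then show ?thesis using that by simp
  qed
  fix u u' assume "u \<in> {a..<a+l}" "u' \<in> {a..<a+l}" "u mod t = u' mod t"
  then show "u = u'" using *[of u u'] *[of u' u] by (cases "u \<le> u'") auto
qed

lemma card_mod_image:
  fixes t :: nat
  assumes "l \<le> t"
  shows "card ((\<lambda>u. u mod t) ` {a..<a+l}) = l"
  by (subst card_image[OF inj_mod_interval[OF assms]]) simp

lemma card_mod_le1:
  fixes t :: nat
  assumes "l \<le> t"
  shows "card {u\<in>{a..<a+l}. u mod t = r} \<le> 1"
proof -
  have "inj_on (\<lambda>u. u mod t) {u\<in>{a..<a+l}. u mod t = r}"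
    by (rule inj_on_subset[OF inj_mod_interval[OF assms]]) auto
  then have "card {u\<in>{a..<a+l}. u mod t = r} = card ((\<lambda>u. u mod t) ` {u\<in>{a..<a+l}. u mod t = r})"
    by (rule card_image[symmetric])
  also have "\<dots> \<le> card {r}" by (rule card_mono) auto
  finally show ?thesis by simp
qed

lemma count_mult:
  fixes t :: nat
  assumes "r < t"
  shows "card {u. u < t * q \<and> u mod t = r} = q"
proof -
  have "{u. u < t * q \<and> u mod t = r} = (\<lambda>k. k * t + r) ` {..<q}"
  proof (rule set_eqI, rule iffI)
    fix u assume u: "u \<in> {u. u < t * q \<and> u mod t = r}"
    then have "u = (u div t) * t + r" using div_mult_mod_eq[of u t] by simp
    moreover have "u div t < q" using u less_mult_imp_div_less[of u q t] by (simp add: mult.commute)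
    ultimately show "u \<in> (\<lambda>k. k * t + r) ` {..<q}" by blast
  next
    fix u assume "u \<in> (\<lambda>k. k * t + r) ` {..<q}"
    then obtain k where k: "k < q" "u = k * t + r" by auto
    have "k * t + r < k * t + t" using assms by simp
    also have "\<dots> = Suc k * t" by simp
    also have "\<dots> \<le> q * t" using k by (intro mult_le_mono1) simp
    also have "\<dots> = t * q" by simp
    finally show "u \<in> {u. u < t * q \<and> u mod t = r}" using k assms by simp
  qed
  moreover have "inj_on (\<lambda>k. k * t + r) {..<q}" using assms by (intro inj_onI) simp
  ultimately show ?thesis by (simp add: card_image)
qed

lemma count_ge:
  fixes t :: nat
  assumes "r < t"
  shows "N div t \<le> card {u. u < N \<and> u mod t = r}"
proof -
  have le: "t * (N div t) \<le> N" by simp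
  have "{u. u < t * (N div t) \<and> u mod t = r} \<subseteq> {u. u < N \<and> u mod t = r}"
    by (auto intro: less_le_trans[OF _ le])
  then have "card {u. u < t * (N div t) \<and> u mod t = r} \<le> card {u. u < N \<and> u mod t = r}"
    by (rule card_mono[rotated]) simp
  then show ?thesis using count_mult[OF assms] by simp
qed

definition Pf :: "nat list \<Rightarrow> nat \<Rightarrow> nat" where "Pf ys k = sum_list (take k ys)"

definition Bf :: "nat \<Rightarrow> nat list \<Rightarrow> nat \<Rightarrow> nat set" where
  "Bf t ys r = {i \<in> {1..length ys}. \<exists>u. Pf ys (i-1) \<le> u \<and> u < Pf ys i \<and> u mod t = r}"

lemma Pf_Suc: "k < length ys \<Longrightarrow> Pf ys (Suc k) = Pf ys k + ys ! k"
  unfolding Pf_def by (simp add: take_Suc_conv_app_nth)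

lemma card_Bf_prefix:
  assumes "\<forall>x\<in>set ys. x \<le> t" "j \<le> length ys"
  shows "card (Bf t ys r \<inter> {1..j}) = card {u. u < Pf ys j \<and> u mod t = r}"
  using assms(2)
proof (induction j)
  case 0
  then show ?case by (simp add: Pf_def)
next
  case (Suc j)
  have jl: "j < length ys" using Suc.prems by simp
  have yj: "ys ! j \<le> t" using assms(1) jl by simp
  define I where "I = {u\<in>{Pf ys j..<Pf ys j + ys ! j}. u mod t = r}"
  have PS: "Pf ys (Suc j) = Pf ys j + ys ! j" by (rule Pf_Suc[OF jl])
  have mem: "Suc j \<in> Bf t ys r \<longleftrightarrow> I \<noteq> {}"
    unfolding Bf_def I_def using jl PS by auto
  have fI: "finite I" by (simp add: I_def)
  have le1: "card I \<le> 1" unfolding I_def by (rule card_mod_le1[OF yj])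
  have cI: "card I = (if I = {} then 0 else 1)"
  proof (cases "I = {}")
    case False
    then have "card I \<noteq> 0" using fI by simp
    then show ?thesis using le1 False by simp
  qed simp
  have s1: "Bf t ys r \<inter> {1..Suc j} = (Bf t ys r \<inter> {1..j}) \<union> (if I = {} then {} else {Suc j})"
    using mem by (auto simp: le_Suc_eq)
  have s2: "{u. u < Pf ys (Suc j) \<and> u mod t = r} = {u. u < Pf ys j \<and> u mod t = r} \<union> I"
    unfolding PS I_def by auto
  have "card (Bf t ys r \<inter> {1..Suc j}) = card (Bf t ys r \<inter> {1..j}) + (if I = {} then 0 else 1)"
    unfolding s1 by (cases "I = {}") simp_all
  also have "\<dots> = card {u. u < Pf ys j \<and> u mod t = r} + card I"
    using Suc.IH Suc.prems cI by simp
  also have "\<dots> = card {u. u < Pf ys (Suc j) \<and> u mod t = r}"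
    unfolding s2 by (rule card_Un_disjoint[symmetric]) (auto simp: I_def)
  finally show ?case .
qed

lemma card_Bf_point:
  assumes "\<forall>x\<in>set ys. x \<le> t" "0 < t" "i \<in> {1..length ys}"
  shows "card {r\<in>{..<t}. i \<in> Bf t ys r} = ys ! (i - 1)"
proof -
  have il: "i - 1 < length ys" and iS: "i = Suc (i - 1)" using assms(3) by auto
  have yi: "ys ! (i-1) \<le> t" using assms(1) il by simp
  have PS: "Pf ys i = Pf ys (i-1) + ys ! (i-1)" using Pf_Suc[OF il] iS by simp
  have "{r\<in>{..<t}. i \<in> Bf t ys r} = (\<lambda>u. u mod t) ` {Pf ys (i-1)..<Pf ys (i-1) + ys ! (i-1)}"
    unfolding Bf_def using assms(2,3) PS by auto
  then show ?thesis using card_mod_image[OF yi] by simp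
qed

definition Yset :: "nat \<Rightarrow> nat set \<Rightarrow> nat \<Rightarrow> nat list set" where
  "Yset n S t = {ys. length ys = n \<and> (\<forall>x\<in>set ys. x \<le> t) \<and>
     (\<forall>j\<le>n. t * card (S \<inter> {1..j}) \<le> sum_list (take j ys)) \<and> sum_list ys = t * card S}"

definition emb :: "nat \<Rightarrow> nat list \<Rightarrow> nat \<Rightarrow> real" where
  "emb n ys = (\<lambda>i. if i \<in> {1..n} then real (ys ! (i - 1)) else 0)"

lemma prefix_set_eq: "X \<subseteq> {1..n} \<Longrightarrow> {x\<in>X. x \<le> j} = X \<inter> {1..j}"
  by auto

lemma finite_bases: "finite (schubert_bases n S)"
  by (rule finite_subset[of _ "Pow {1..n}"]) (auto simp: schubert_bases_def)

lemma bases_props: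
  assumes "S \<subseteq> {1..n}" "B \<in> schubert_bases n S"
  shows "B \<subseteq> {1..n}" "card B = card S" "card (S \<inter> {1..j}) \<le> card (B \<inter> {1..j})"
proof -
  show B: "B \<subseteq> {1..n}" using assms unfolding schubert_bases_def by auto
  have g: "gale_le B S" using assms unfolding schubert_bases_def by auto
  then show "card B = card S" unfolding gale_le_def by simp
  have fB: "finite B" "finite S" using B assms finite_subset by auto
  show "card (S \<inter> {1..j}) \<le> card (B \<inter> {1..j})"
    using gale_prefix[OF fB g, of j] prefix_set_eq[OF B, of j] prefix_set_eq[OF assms(1), of j] by simp
qed

lemma bases_intro:
  assumes "S \<subseteq> {1..n}" "B \<subseteq> {1..n}" "card B = card S" "\<And>j. card (S \<inter> {1..j}) \<le> card (B \<inter> {1..j})"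
  shows "B \<in> schubert_bases n S"
proof -
  have fB: "finite B" "finite S" using finite_subset[OF assms(2)] finite_subset[OF assms(1)] by auto
  have "gale_le B S"
    by (rule prefix_gale[OF fB assms(3)])
       (use assms(4) prefix_set_eq[OF assms(2)] prefix_set_eq[OF assms(1)] in simp)
  then show ?thesis using assms unfolding schubert_bases_def by simp
qed

lemma sum_if_card: "finite A \<Longrightarrow> (\<Sum>r\<in>A. (if P r then 1 else 0) :: real) = real (card {r\<in>A. P r})"
  by (simp add: sum.If_cases Int_def)

lemma sum_take_map:
  assumes "j \<le> n"
  shows "sum_list (take j (map f [1..<n+1])) = (\<Sum>i\<in>{1..j}. f i)"
proof -
  have "take j [1..<n+1] = [1..<1+j]" by (rule take_upt) (use assms in simp)
  then have "take j (map f [1..<n+1]) = map f [1..<1+j]" by (simp only: take_map)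
  then have "sum_list (take j (map f [1..<n+1])) = sum_list (map f [1..<1+j])" by simp
  also have "\<dots> = sum f (set [1..<1+j])" by (rule sum_set_upt_conv_sum_list_nat[symmetric])
  also have "set [1..<1+j] = {1..j}" by auto
  finally show ?thesis .
qed

lemma sum_indicator_card: "finite A \<Longrightarrow> (\<Sum>r\<in>A. indicator (F r) i :: real) = real (card {r\<in>A. i \<in> F r})"
  unfolding indicator_def of_bool_def by (rule sum_if_card)

lemma emb_in_Q:
  assumes S: "S \<subseteq> {1..n}" and t: "0 < t" and ys: "ys \<in> Yset n S t"
  shows "(\<forall>i. emb n ys i \<in> \<int>) \<and> (\<exists>x\<in>matroid_polytope (schubert_bases n S). emb n ys = (\<lambda>i. real t * x i))"
proof -
  define Bs where "Bs = schubert_bases n S"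
  have len: "length ys = n" and bd: "\<forall>x\<in>set ys. x \<le> t"
    and pre: "\<And>j. j \<le> n \<Longrightarrow> t * card (S \<inter> {1..j}) \<le> Pf ys j"
    and tot: "Pf ys n = t * card S"
    using ys unfolding Yset_def Pf_def by auto
  have inBs: "Bf t ys r \<in> Bs" if r: "r < t" for r
  proof -
    have Bsub: "Bf t ys r \<subseteq> {1..n}" unfolding Bf_def using len by auto
    have pre_n: "card (S \<inter> {1..j}) \<le> card (Bf t ys r \<inter> {1..j})" if j: "j \<le> n" for j
    proof -
      have "card (S \<inter> {1..j}) = (t * card (S \<inter> {1..j})) div t" using t by simp
      also have "\<dots> \<le> Pf ys j div t" using pre[OF j] by (rule div_le_mono)
      also have "\<dots> \<le> card {u. u < Pf ys j \<and> u mod t = r}" by (rule count_ge[OF r])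
      also have "\<dots> = card (Bf t ys r \<inter> {1..j})" using card_Bf_prefix[OF bd, of j r] j len by simp
      finally show ?thesis .
    qed
    have pre_all: "card (S \<inter> {1..j}) \<le> card (Bf t ys r \<inter> {1..j})" for j
    proof (cases "j \<le> n")
      case True then show ?thesis by (rule pre_n)
    next
      case False
      then have "S \<inter> {1..j} = S \<inter> {1..n}" "Bf t ys r \<inter> {1..j} = Bf t ys r \<inter> {1..n}"
        using S Bsub by auto
      then show ?thesis using pre_n[of n] by simp
    qed
    have "card (Bf t ys r) = card (Bf t ys r \<inter> {1..n})" using Bsub by (simp add: Int_absorb2)
    also have "\<dots> = card {u. u < Pf ys n \<and> u mod t = r}" using card_Bf_prefix[OF bd, of n r] len by simp
    also have "\<dots> = card S" unfolding tot by (rule count_mult[OF r])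
    finally have cB: "card (Bf t ys r) = card S" .
    show ?thesis unfolding Bs_def by (rule bases_intro[OF S Bsub cB pre_all])
  qed
  have finBs: "finite Bs" unfolding Bs_def by (rule finite_bases)
  define l where "l B = real (card {r\<in>{..<t}. Bf t ys r = B}) / real t" for B
  define x where "x = (\<lambda>i. \<Sum>B\<in>Bs. l B * indicator B i)"
  have grp: "(\<Sum>B\<in>Bs. real (card {r\<in>{..<t}. Bf t ys r = B}) * h B) = (\<Sum>r<t. h (Bf t ys r))" for h :: "nat set \<Rightarrow> real"
  proof -
    have "(\<Sum>B\<in>Bs. (\<Sum>r\<in>{r\<in>{..<t}. Bf t ys r = B}. h (Bf t ys r))) = (\<Sum>r<t. h (Bf t ys r))"
      by (rule sum.group) (use finBs inBs in auto)
    moreover have "(\<Sum>r\<in>{r\<in>{..<t}. Bf t ys r = B}. h (Bf t ys r)) = real (card {r\<in>{..<t}. Bf t ys r = B}) * h B" for B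
      by simp
    ultimately show ?thesis by simp
  qed
  have l0: "\<forall>B\<in>Bs. 0 \<le> l B" unfolding l_def by simp
  have l1: "(\<Sum>B\<in>Bs. l B) = 1"
  proof -
    have "(\<Sum>B\<in>Bs. l B) = (\<Sum>B\<in>Bs. real (card {r\<in>{..<t}. Bf t ys r = B}) * 1) / real t"
      unfolding l_def by (simp add: sum_divide_distrib)
    also have "\<dots> = 1" unfolding grp using t by simp
    finally show ?thesis .
  qed
  have xP: "x \<in> matroid_polytope Bs" unfolding matroid_polytope_def x_def using l0 l1 by blast
  have embx: "emb n ys = (\<lambda>i. real t * x i)"
  proof
    fix i
    have "real t * x i = (\<Sum>B\<in>Bs. real (card {r\<in>{..<t}. Bf t ys r = B}) * indicator B i)"
      unfolding x_def l_def using t by (simp add: sum_distrib_left)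
    also have "\<dots> = (\<Sum>r<t. indicator (Bf t ys r) i)" by (rule grp)
    also have "\<dots> = real (card {r\<in>{..<t}. i \<in> Bf t ys r})" by (rule sum_indicator_card) simp
    also have "\<dots> = emb n ys i"
    proof (cases "i \<in> {1..n}")
      case True
      then show ?thesis using card_Bf_point[OF bd t, of i] len unfolding emb_def by simp
    next
      case False
      then have "{r\<in>{..<t}. i \<in> Bf t ys r} = {}" unfolding Bf_def using len by auto
      then show ?thesis using False unfolding emb_def by auto
    qed
    finally show "emb n ys i = real t * x i" by simp
  qed
  have "\<forall>i. emb n ys i \<in> \<int>" unfolding emb_def by simp
  then show ?thesis using xP embx unfolding Bs_def by blast
qed

lemma Q_in_emb:
  assumes S: "S \<subseteq> {1..n}" and t: "0 < t"
    and yZ: "\<forall>i. y i \<in> \<int>" and xP: "x \<in> matroid_polytope (schubert_bases n S)"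
    and yx: "y = (\<lambda>i. real t * x i)"
  shows "y \<in> emb n ` Yset n S t"
proof -
  define Bs where "Bs = schubert_bases n S"
  have finBs: "finite Bs" unfolding Bs_def by (rule finite_bases)
  obtain l where l0: "\<forall>B\<in>Bs. 0 \<le> l B" and l1: "(\<Sum>B\<in>Bs. l B) = 1"
    and xl: "x = (\<lambda>i. \<Sum>B\<in>Bs. l B * indicator B i)"
    using xP unfolding matroid_polytope_def Bs_def by blast
  have Bsub: "\<And>B. B \<in> Bs \<Longrightarrow> B \<subseteq> {1..n}" using bases_props(1)[OF S] unfolding Bs_def by blast
  have x0: "0 \<le> x i" for i unfolding xl using l0 by (auto intro!: sum_nonneg)
  have x1: "x i \<le> 1" for i
  proof -
    have "x i \<le> (\<Sum>B\<in>Bs. l B)" unfolding xl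
      by (rule sum_mono) (use l0 in \<open>auto simp: indicator_def\<close>)
    then show ?thesis using l1 by simp
  qed
  have xout: "x i = 0" if "i \<notin> {1..n}" for i
    unfolding xl using that by (intro sum.neutral) (auto simp: indicator_def dest!: Bsub)
  have yi: "real (nat \<lfloor>y i\<rfloor>) = y i" for i
  proof -
    obtain z where z: "y i = of_int z" using yZ by (meson Ints_cases)
    have "0 \<le> y i" unfolding yx using x0 by simp
    then have "0 \<le> z" using z by simp
    then show ?thesis using z by simp
  qed
  have yt: "nat \<lfloor>y i\<rfloor> \<le> t" for i
  proof -
    have "y i \<le> real t" unfolding yx using x1[of i] t by (simp add: mult_left_le)
    then have "real (nat \<lfloor>y i\<rfloor>) \<le> real t" using yi by simp
    then show ?thesis by (simp only: of_nat_le_iff)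
  qed
  define ys where "ys = map (\<lambda>i. nat \<lfloor>y i\<rfloor>) [1..<n+1]"
  have sumx: "(\<Sum>i\<in>{1..j}. x i) = (\<Sum>B\<in>Bs. l B * real (card (B \<inter> {1..j})))" for j
  proof -
    have "(\<Sum>i\<in>{1..j}. x i) = (\<Sum>B\<in>Bs. l B * (\<Sum>i\<in>{1..j}. indicator B i))"
      unfolding xl by (subst sum.swap) (simp add: sum_distrib_left)
    also have "\<dots> = (\<Sum>B\<in>Bs. l B * real (card (B \<inter> {1..j})))"
    proof (rule sum.cong[OF refl])
      fix B
      have "(\<Sum>i\<in>{1..j}. indicator B i :: real) = real (card ({1..j} \<inter> B))"
        using sum_if_card[of "{1..j}" "\<lambda>i. i \<in> B"] by (simp add: indicator_def of_bool_def Int_def)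
      then show "l B * (\<Sum>i\<in>{1..j}. indicator B i) = l B * real (card (B \<inter> {1..j}))"
        by (simp add: Int_commute)
    qed
    finally show ?thesis .
  qed
  have sumys: "real (sum_list (take j ys)) = real t * (\<Sum>B\<in>Bs. l B * real (card (B \<inter> {1..j})))"
    if j: "j \<le> n" for j
  proof -
    have "real (sum_list (take j ys)) = (\<Sum>i\<in>{1..j}. real (nat \<lfloor>y i\<rfloor>))"
      unfolding ys_def sum_take_map[OF j] by simp
    also have "\<dots> = (\<Sum>i\<in>{1..j}. y i)" using yi by simp
    also have "\<dots> = real t * (\<Sum>i\<in>{1..j}. x i)" unfolding yx by (simp add: sum_distrib_left)
    finally show ?thesis unfolding sumx .
  qed
  have ysY: "ys \<in> Yset n S t" unfolding Yset_def
  proof (intro CollectI conjI allI impI)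
    show "length ys = n" unfolding ys_def by simp
    show "\<forall>x\<in>set ys. x \<le> t" unfolding ys_def using yt by auto
  next
    fix j assume j: "j \<le> n"
    have "real t * real (card (S \<inter> {1..j})) = real t * (\<Sum>B\<in>Bs. l B * real (card (S \<inter> {1..j})))"
      using l1 by (simp add: sum_distrib_right[symmetric])
    also have "\<dots> \<le> real t * (\<Sum>B\<in>Bs. l B * real (card (B \<inter> {1..j})))"
      by (intro mult_left_mono sum_mono) (use l0 bases_props(3)[OF S] in \<open>auto simp: Bs_def intro!: mult_left_mono\<close>)
    also have "\<dots> = real (sum_list (take j ys))" by (rule sumys[OF j, symmetric])
    finally have "real (t * card (S \<inter> {1..j})) \<le> real (sum_list (take j ys))" by simp
    then show "t * card (S \<inter> {1..j}) \<le> sum_list (take j ys)" by (simp only: of_nat_le_iff)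
  next
    have "real (sum_list ys) = real (sum_list (take n ys))" unfolding ys_def by simp
    also have "\<dots> = real t * (\<Sum>B\<in>Bs. l B * real (card (B \<inter> {1..n})))" by (rule sumys) simp
    also have "\<dots> = real t * (\<Sum>B\<in>Bs. l B * real (card S))"
      using Bsub bases_props(2)[OF S] unfolding Bs_def by (simp add: Int_absorb2)
    also have "\<dots> = real (t * card S)" using l1 by (simp add: sum_distrib_right[symmetric])
    finally show "sum_list ys = t * card S" by (simp only: of_nat_eq_iff)
  qed
  have "emb n ys = y"
  proof
    fix i
    show "emb n ys i = y i"
    proof (cases "i \<in> {1..n}")
      case True
      then have "ys ! (i - 1) = nat \<lfloor>y i\<rfloor>" unfolding ys_def by (auto simp del: upt_Suc)
      then show ?thesis using True yi unfolding emb_def by simp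
    next
      case False
      then show ?thesis using xout[OF False] unfolding emb_def yx by auto
    qed
  qed
  then show ?thesis using ysY by blast
qed

lemma inj_emb: "inj_on (emb n) (Yset n S t)"
proof (rule inj_onI)
  fix ys ys' assume ys: "ys \<in> Yset n S t" and ys': "ys' \<in> Yset n S t" and eq: "emb n ys = emb n ys'"
  have l: "length ys = n" "length ys' = n" using ys ys' unfolding Yset_def by auto
  show "ys = ys'"
  proof (rule nth_equalityI)
    show "length ys = length ys'" using l by simp
    fix i assume i: "i < length ys"
    have "emb n ys (Suc i) = emb n ys' (Suc i)" using eq by simp
    then show "ys ! i = ys' ! i" using i l unfolding emb_def by simp
  qed
qed

lemma lattice_Yset:
  assumes S: "S \<subseteq> {1..n}" and t: "0 < t"
  shows "ehrhart_schubert n S t = card (Yset n S t)"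
proof -
  have "{y. (\<forall>i. y i \<in> \<int>) \<and> (\<exists>x\<in>matroid_polytope (schubert_bases n S). y = (\<lambda>i. real t * x i))}
      = emb n ` Yset n S t"
  proof (rule set_eqI, rule iffI)
    fix y assume "y \<in> {y. (\<forall>i. y i \<in> \<int>) \<and> (\<exists>x\<in>matroid_polytope (schubert_bases n S). y = (\<lambda>i. real t * x i))}"
    then obtain x where "\<forall>i. y i \<in> \<int>" "x \<in> matroid_polytope (schubert_bases n S)" "y = (\<lambda>i. real t * x i)"
      by blast
    then show "y \<in> emb n ` Yset n S t" by (rule Q_in_emb[OF S t])
  next
    fix y assume "y \<in> emb n ` Yset n S t"
    then obtain ys where "ys \<in> Yset n S t" "y = emb n ys" by blast
    then show "y \<in> {y. (\<forall>i. y i \<in> \<int>) \<and> (\<exists>x\<in>matroid_polytope (schubert_bases n S). y = (\<lambda>i. real t * x i))}"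
      using emb_in_Q[OF S t] by blast
  qed
  then show ?thesis unfolding ehrhart_schubert_def lattice_count_def
    by (simp add: card_image[OF inj_emb])
qed

lemma sum_take_nth: "j \<le> length cs \<Longrightarrow> sum_list (take j cs) = (\<Sum>i<j. cs ! i)"
  by (simp add: sum_list_sum_nth atLeast0LessThan min_def)

lemma ball_shift: "(\<forall>j\<in>{1..m}. P j) \<longleftrightarrow> (\<forall>k<m. P (Suc k))"
  by (auto, metis Suc_pred' atLeastAtMost_iff less_Suc_eq_le not_less_eq_eq neq0_conv Suc_le_lessD)

lemma u_shift:
  assumes "length rs = 2 * m"
  shows "u_of rs (Suc k) = min (rs!(2*k)) (\<Sum>i\<in>{Suc k..<m}. rs!(2*i+1))"
proof -
  have "(\<Sum>j\<in>{Suc k + 1..m}. rr rs (2*j)) = (\<Sum>j\<in>{Suc (Suc k)..<Suc m}. rr rs (2*j))"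
    by (rule sum.cong) auto
  also have "\<dots> = (\<Sum>i\<in>{Suc k..<m}. rr rs (2 * Suc i))"
    by (simp only: sum.atLeast_Suc_lessThan_Suc_shift comp_def)
  also have "\<dots> = (\<Sum>i\<in>{Suc k..<m}. rs!(2*i+1))" unfolding rr_def by simp
  finally show ?thesis unfolding u_of_def rr_def using assms by simp
qed

lemma v_shift: "v_of rs (Suc k) = min (rs!(2*k+1)) (\<Sum>i<k. rs!(2*i))"
proof -
  have "(\<Sum>j\<in>{1..<Suc k}. rr rs (2*j - 1)) = (\<Sum>j\<in>{Suc 0..<Suc k}. rr rs (2*j - 1))" by simp
  also have "\<dots> = (\<Sum>i\<in>{0..<k}. rr rs (2 * Suc i - 1))"
    by (simp only: sum.atLeast_Suc_lessThan_Suc_shift comp_def)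
  also have "\<dots> = (\<Sum>i<k. rs!(2*i))" unfolding rr_def by (simp add: atLeast0LessThan)
  finally show ?thesis unfolding v_of_def rr_def by simp
qed

lemma le_tmin: "(c::int) \<le> int t * int x \<Longrightarrow> c \<le> int t * int y \<Longrightarrow> c \<le> int t * int (min x y)"
  by (simp add: min_def)

lemma ge_tmin: "- (int t * int x) \<le> (c::int) \<Longrightarrow> - (int t * int y) \<le> c \<Longrightarrow> - (int t * int (min x y)) \<le> c"
  by (simp add: min_def)

lemma adm_eq:
  assumes len: "length rs = 2 * m"
  shows "admissible_c rs t = As t (map (\<lambda>k. (rs!(2*k), rs!(2*k+1))) [0..<m]) 0"
    (is "_ = As t ?bl 0")
proof -
  have m: "length rs div 2 = m" using len by simp
  have blk: "k < m \<Longrightarrow> ?bl ! k = (rs!(2*k), rs!(2*k+1))" for k by simp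
  show ?thesis
  proof (rule set_eqI, rule iffI)
    fix cs assume cs: "cs \<in> admissible_c rs t"
    have lc: "length cs = m" and tot: "sum_list cs = 0"
      and cond: "\<And>k. k < m \<Longrightarrow> - (int t * int (v_of rs (Suc k))) \<le> cs ! k \<and> cs ! k \<le> int t * int (u_of rs (Suc k))
          \<and> 0 \<le> sum_list (take (Suc k) cs)"
      using cs unfolding admissible_c_def m ball_shift by auto
    show "cs \<in> As t ?bl 0" unfolding As_def
    proof (intro CollectI conjI allI impI)
      show "length cs = length ?bl" using lc by simp
    next
      fix k assume k: "k < length ?bl"
      then have km: "k < m" by simp
      have "- (int t * int (rs!(2*k+1))) \<le> - (int t * int (v_of rs (Suc k)))"
        unfolding v_shift by (simp add: mult_left_mono)
      then show "- (int t * int (snd (?bl ! k))) \<le> cs ! k" using cond[OF km] km by simp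
      have "int t * int (u_of rs (Suc k)) \<le> int t * int (rs!(2*k))"
        unfolding u_shift[OF len] by (simp add: mult_left_mono)
      then show "cs ! k \<le> int t * int (fst (?bl ! k))" using cond[OF km] km by simp
    next
      fix j assume j: "j \<le> length ?bl"
      show "0 \<le> 0 + sum_list (take j cs)"
      proof (cases j)
        case 0 then show ?thesis by simp
      next
        case (Suc k) then show ?thesis using cond[of k] j by simp
      qed
    next
      show "0 + sum_list cs = 0" using tot by simp
    qed
  next
    fix cs assume cs: "cs \<in> As t ?bl 0"
    have lc: "length cs = m"
      and bnd: "\<And>k. k < m \<Longrightarrow> - (int t * int (rs!(2*k+1))) \<le> cs ! k \<and> cs ! k \<le> int t * int (rs!(2*k))"
      and pre: "\<And>j. j \<le> m \<Longrightarrow> 0 \<le> sum_list (take j cs)"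
      and tot: "sum_list cs = 0"
      using cs unfolding As_def by auto
    have P: "sum_list (take j cs) = (\<Sum>i<j. cs ! i)" if "j \<le> m" for j
      using sum_take_nth[of j cs] that lc by simp
    have totn: "(\<Sum>i<m. cs ! i) = 0" using P[of m] tot lc by simp
    have cond: "- (int t * int (v_of rs (Suc k))) \<le> cs ! k \<and> cs ! k \<le> int t * int (u_of rs (Suc k))
          \<and> 0 \<le> sum_list (take (Suc k) cs)" if k: "k < m" for k
    proof (intro conjI)
      have Pk: "(\<Sum>i<Suc k. cs ! i) = (\<Sum>i<k. cs ! i) + cs ! k" by simp
      have p0: "0 \<le> (\<Sum>i<k. cs ! i)" using pre[of k] P[of k] k by simp
      have p1: "0 \<le> (\<Sum>i<Suc k. cs ! i)" using pre[of "Suc k"] P[of "Suc k"] k by simp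
      have split: "(\<Sum>i<m. cs ! i) = (\<Sum>i<Suc k. cs ! i) + (\<Sum>i\<in>{Suc k..<m}. cs ! i)"
        using k by (metis Suc_leI atLeast0LessThan sum.atLeastLessThan_concat zero_le)
      have up2: "(\<Sum>i\<in>{Suc k..<m}. - cs ! i) \<le> (\<Sum>i\<in>{Suc k..<m}. int t * int (rs!(2*i+1)))"
      proof (rule sum_mono)
        fix i assume "i \<in> {Suc k..<m}"
        then have "i < m" by simp
        from bnd[OF this] show "- cs ! i \<le> int t * int (rs!(2*i+1))" by linarith
      qed
      have "cs ! k \<le> int t * int (\<Sum>i\<in>{Suc k..<m}. rs!(2*i+1))"
        using Pk p0 split totn up2 by (simp add: sum_negf sum_distrib_left)
      then show "cs ! k \<le> int t * int (u_of rs (Suc k))"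
        unfolding u_shift[OF len] using bnd[OF k] by (intro le_tmin) auto
      have lo2: "(\<Sum>i<k. cs ! i) \<le> (\<Sum>i<k. int t * int (rs!(2*i)))"
      proof (rule sum_mono)
        fix i assume "i \<in> {..<k}"
        then have "i < m" using k by simp
        from bnd[OF this] show "cs ! i \<le> int t * int (rs!(2*i))" by linarith
      qed
      have "- (int t * int (\<Sum>i<k. rs!(2*i))) \<le> cs ! k"
        using Pk p1 lo2 by (simp add: sum_distrib_left)
      then show "- (int t * int (v_of rs (Suc k))) \<le> cs ! k"
        unfolding v_shift using bnd[OF k] by (intro ge_tmin) auto
      show "0 \<le> sum_list (take (Suc k) cs)" using pre[of "Suc k"] k by simp
    qed
    show "cs \<in> admissible_c rs t" unfolding admissible_c_def m ball_shift
      using lc tot cond by auto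
  qed
qed

lemma ps_blocks:
  "concat (map (\<lambda>k. replicate (rs!k) (odd k)) [0..<2*m]) = ofbl (map (\<lambda>k. (rs!(2*k), rs!(2*k+1))) [0..<m])"
proof (induction m)
  case 0 then show ?case by (simp add: ofbl_def)
next
  case (Suc m)
  have "[0..<2 * Suc m] = [0..<2*m] @ [2*m, 2*m+1]" by (simp add: upt_Suc_append)
  then show ?case using Suc by (simp add: ofbl_def blk_def)
qed

lemma cntT_sum: "cntT xs = sum_list (map (\<lambda>b. if b then 1 else 0) xs)"
  unfolding cntT_def by (induction xs) auto

lemma cntT_take_S:
  assumes "j \<le> n"
  shows "cntT (take j (map (\<lambda>i. i \<in> S) [1..<n+1])) = card (S \<inter> {1..j})"
proof -
  have "cntT (take j (map (\<lambda>i. i \<in> S) [1..<n+1])) = sum_list (take j (map (\<lambda>i. if i \<in> S then 1 else 0) [1..<n+1]))"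
    unfolding cntT_sum by (simp add: take_map comp_def)
  also have "\<dots> = (\<Sum>i\<in>{1..j}. if i \<in> S then 1 else 0)" by (rule sum_take_map[OF assms])
  also have "\<dots> = card {i\<in>{1..j}. i \<in> S}" by (simp add: sum.If_cases Int_def)
  also have "{i\<in>{1..j}. i \<in> S} = S \<inter> {1..j}" by auto
  finally show ?thesis .
qed

lemma Yset_Ws:
  assumes S: "S \<subseteq> {1..n}"
  shows "Yset n S t = Ws t (map (\<lambda>i. i \<in> S) [1..<n+1]) 0"
proof -
  define ps where "ps = map (\<lambda>i. i \<in> S) [1..<n+1]"
  have lps: "length ps = n" unfolding ps_def by simp
  have ct: "j \<le> n \<Longrightarrow> cntT (take j ps) = card (S \<inter> {1..j})" for j unfolding ps_def by (rule cntT_take_S)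
  have ctn: "cntT ps = card S" using ct[of n] lps S by (simp add: Int_absorb2)
  have eq1: "(\<forall>j\<le>n. t * card (S \<inter> {1..j}) \<le> sum_list (take j ys)) \<longleftrightarrow>
      (\<forall>j\<le>length ps. int t * int (cntT (take j ps)) \<le> 0 + int (sum_list (take j ys)))" for ys
  proof -
    have "t * card (S \<inter> {1..j}) \<le> sum_list (take j ys) \<longleftrightarrow> int t * int (cntT (take j ps)) \<le> 0 + int (sum_list (take j ys))"
      if "j \<le> n" for j
      using ct[OF that] by (metis add_0 of_nat_le_iff of_nat_mult)
    then show ?thesis using lps by auto
  qed
  have eq2: "sum_list ys = t * card S \<longleftrightarrow> 0 + int (sum_list ys) = int t * int (cntT ps)" for ys
    unfolding ctn by (metis add_0 of_nat_eq_iff of_nat_mult)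
  show ?thesis unfolding Yset_def Ws_def ps_def[symmetric] using eq1 eq2 lps by auto
qed

lemma prod_shift:
  "(\<Prod>j = 1..m. FF (rr rs (2*j - 1)) (rr rs (2*j)) (cs ! (j-1)) t) =
   (\<Prod>k<m. FF (rs!(2*k)) (rs!(2*k+1)) (cs ! k) t)"
proof -
  have "(\<Prod>j = 1..m. FF (rr rs (2*j - 1)) (rr rs (2*j)) (cs ! (j-1)) t) =
     (\<Prod>j\<in>{Suc 0..<Suc m}. FF (rr rs (2*j - 1)) (rr rs (2*j)) (cs ! (j-1)) t)"
    by (rule prod.cong) auto
  also have "\<dots> = (\<Prod>k\<in>{0..<m}. FF (rr rs (2*Suc k - 1)) (rr rs (2*Suc k)) (cs ! (Suc k - 1)) t)"
    by (simp only: prod.atLeast_Suc_lessThan_Suc_shift comp_def)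
  also have "\<dots> = (\<Prod>k<m. FF (rs!(2*k)) (rs!(2*k+1)) (cs ! k) t)"
    unfolding rr_def by (simp add: atLeast0LessThan)
  finally show ?thesis .
qed

theorem theorem1p1:
  fixes n :: nat and S :: "nat set" and rs :: "nat list" and t :: nat
  assumes "1 \<le> n" and "S \<subseteq> {1..n}" and "n \<in> S"
    and "is_r_of n S rs"
    and "0 < t"
  shows "int (ehrhart_schubert n S t) =
    (\<Sum>cs\<in>admissible_c rs t. \<Prod>j = 1..length rs div 2.
        FF (rr rs (2*j - 1)) (rr rs (2*j)) (cs ! (j-1)) t)"
proof -
  define m where "m = length rs div 2"
  have ev: "even (length rs)" and pos: "\<And>k. 1 \<le> k \<Longrightarrow> k < length rs \<Longrightarrow> 0 < rs ! k"
    and mp: "map (\<lambda>i. i \<in> S) [1..<n+1] = concat (map (\<lambda>k. replicate (rs ! k) (odd k)) [0..<length rs])"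
    using assms(4) unfolding is_r_of_def by auto
  have len: "length rs = 2 * m" using ev m_def by simp
  define bl where "bl = map (\<lambda>k. (rs!(2*k), rs!(2*k+1))) [0..<m]"
  have ps: "map (\<lambda>i. i \<in> S) [1..<n+1] = ofbl bl" unfolding mp len bl_def by (rule ps_blocks)
  have blpos: "\<forall>x\<in>set bl. 1 \<le> fst x + snd x"
  proof
    fix x assume "x \<in> set bl"
    then obtain k where k: "k < m" "x = (rs!(2*k), rs!(2*k+1))" unfolding bl_def by auto
    have "0 < rs ! (2*k+1)" using pos[of "2*k+1"] k len by simp
    then show "1 \<le> fst x + snd x" using k by simp
  qed
  have "int (ehrhart_schubert n S t) = int (card (Yset n S t))"
    using lattice_Yset[OF assms(2) assms(5)] by simp
  also have "\<dots> = int (card (Ws t (ofbl bl) 0))" unfolding Yset_Ws[OF assms(2)] ps ..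
  also have "\<dots> = (\<Sum>cs\<in>As t bl 0. prodF t bl cs)" by (rule main_count[OF blpos])
  also have "\<dots> = (\<Sum>cs\<in>admissible_c rs t. prodF t bl cs)" unfolding adm_eq[OF len] bl_def ..
  also have "\<dots> = (\<Sum>cs\<in>admissible_c rs t. \<Prod>j = 1..length rs div 2.
        FF (rr rs (2*j - 1)) (rr rs (2*j)) (cs ! (j-1)) t)"
  proof (rule sum.cong[OF refl])
    fix cs
    have "prodF t bl cs = (\<Prod>k<m. FF (rs!(2*k)) (rs!(2*k+1)) (cs ! k) t)"
      unfolding prodF_def bl_def by (rule prod.cong) auto
    then show "prodF t bl cs = (\<Prod>j = 1..length rs div 2. FF (rr rs (2*j - 1)) (rr rs (2*j)) (cs ! (j-1)) t)"
      unfolding m_def[symmetric] prod_shift by simp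
  qed
  finally show ?thesis .
qed

end
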